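(* Let $n\in\mathbb{N}$, $0\le x_0<x_1<\cdots<x_n$, $I:=[x_0,x_n]$, and for $i\in\{1,\dots,n\}$ let $l_i:I\to[x_{i-1},x_i]$ be a contractive homeomorphism with $l_i(x_0)=x_{i-1}$, $l_i(x_n)=x_i$. Let $L:C^+I\to C^+I$ be a bounded semi-linear operator, and let $f,S_1,\dots,S_n\in C^+I$ with $Lf(x_0)=f(x_0)$ and $Lf(x_n)=f(x_n)$. Define $T$ on $C^+I$ by $$Tg:=f+(S_i\circ l_i^{-1})\cdot\big((g-Lf)\circ l_i^{-1}\big)\quad\text{on } I_i,\ i=1,\dots,n,$$ and assume that $Tg$ takes values in $\mathbb{R}_0^+$ and satisfies the join-up conditions $Tg(x_j-)=Tg(x_j+)$ for $j=1,\dots,n-1$, so that $T:C^+I\to C^+I$. Let $S_\infty:=\max_{i}\|S_i\|_\infty$. If $S_\infty<1$, then $T$ is contractive on $(C^+I,d)$, and its unique fixed point $f^*\in C^+I$ satisfies $$f^*=f+(S_i\circ l_i^{-1})\cdot\big((f^*-Lf)\circ l_i^{-1}\big)\quad\text{on } I_i,\ i=1,\dots,n.$$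
   Context: $\mathbb{R}_0^+:=[0,\infty)$. $C^+I:=\{f\in C(I):f(I)\subset\mathbb{R}_0^+\}$, a semi-vector space over $\mathbb{R}_0^+$ (pointwise addition, nonnegative scalar multiplication), with metric $d(f,g):=\max_{x\in I}(\max\{f(x),g(x)\}-\min\{f(x),g(x)\})$, under which it is complete. $\|\cdot\|_\infty$ is the supremum norm. A map $L$ is semi-linear if $L(u+v)=Lu+Lv$ and $L(\lambda u)=\lambda Lu$ for $\lambda\ge0$; it is bounded if $d(Lu,0)\le M\,d(u,0)$ for some $M>0$ and all $u$. $I_i:=[x_{i-1},x_i)$ for $i<n$, $I_n:=[x_{n-1},x_n]$. Contractive means Lipschitz with constant $<1$ with respect to $d$. *)

theory Defs
  imports "HOL-Analysis.Analysis"
begin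

definition Ival :: "(nat \<Rightarrow> real) \<Rightarrow> nat \<Rightarrow> real set" where
  "Ival x n = {x 0 .. x n}"

text \<open>C^+I, with functions represented extensionally (value 0 outside I).\<close>
definition CplusI :: "(nat \<Rightarrow> real) \<Rightarrow> nat \<Rightarrow> (real \<Rightarrow> real) set" where
  "CplusI x n = {u. continuous_on (Ival x n) u \<and> (\<forall>y\<in>Ival x n. 0 \<le> u y)
                    \<and> (\<forall>y. y \<notin> Ival x n \<longrightarrow> u y = 0)}"

definition dI :: "(nat \<Rightarrow> real) \<Rightarrow> nat \<Rightarrow> (real \<Rightarrow> real) \<Rightarrow> (real \<Rightarrow> real) \<Rightarrow> real" where
  "dI x n u v = (SUP y\<in>Ival x n. max (u y) (v y) - min (u y) (v y))"

definition supnormI :: "(nat \<Rightarrow> real) \<Rightarrow> nat \<Rightarrow> (real \<Rightarrow> real) \<Rightarrow> real" where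
  "supnormI x n u = (SUP y\<in>Ival x n. \<bar>u y\<bar>)"

definition subI :: "(nat \<Rightarrow> real) \<Rightarrow> nat \<Rightarrow> nat \<Rightarrow> real set" where
  "subI x n i = (if i < n then {x (i - 1) ..< x i} else {x (n - 1) .. x n})"

definition Tpiece :: "(nat \<Rightarrow> real) \<Rightarrow> nat \<Rightarrow> (nat \<Rightarrow> real \<Rightarrow> real) \<Rightarrow> (nat \<Rightarrow> real \<Rightarrow> real)
     \<Rightarrow> ((real \<Rightarrow> real) \<Rightarrow> (real \<Rightarrow> real)) \<Rightarrow> (real \<Rightarrow> real) \<Rightarrow> (real \<Rightarrow> real) \<Rightarrow> nat \<Rightarrow> real \<Rightarrow> real" where
  "Tpiece x n l S L f g i y =
     (let z = inv_into (Ival x n) (l i) y in f y + S i z * (g z - L f z))"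

definition Top :: "(nat \<Rightarrow> real) \<Rightarrow> nat \<Rightarrow> (nat \<Rightarrow> real \<Rightarrow> real) \<Rightarrow> (nat \<Rightarrow> real \<Rightarrow> real)
     \<Rightarrow> ((real \<Rightarrow> real) \<Rightarrow> (real \<Rightarrow> real)) \<Rightarrow> (real \<Rightarrow> real) \<Rightarrow> (real \<Rightarrow> real) \<Rightarrow> real \<Rightarrow> real" where
  "Top x n l S L f g y =
     (if \<exists>i\<in>{1..n}. y \<in> subI x n i
      then Tpiece x n l S L f g (THE i. i \<in> {1..n} \<and> y \<in> subI x n i) y
      else 0)"

end

theory Submission
  imports Defs
begin

lemma x_mono_lt:
  assumes "\<forall>i<n. x i < x (Suc i)" "i < j" "j \<le> n"
  shows "(x::nat\<Rightarrow>real) i < x j"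
  using assms(2,3)
proof (induction j)
  case 0 then show ?case by simp
next
  case (Suc j)
  have jn: "j < n" using Suc.prems(2) by simp
  have step: "x j < x (Suc j)" using assms(1) jn by blast
  show ?case
  proof (cases "i = j")
    case True then show ?thesis using step by simp
  next
    case False
    then have "i < j" using Suc.prems(1) by simp
    then have "x i < x j" using Suc.IH jn by simp
    then show ?thesis using step by simp
  qed
qed

lemma x_mono_le:
  assumes "\<forall>i<n. x i < x (Suc i)" "i \<le> j" "j \<le> n"
  shows "(x::nat\<Rightarrow>real) i \<le> x j"
proof (cases "i = j")
  case False then show ?thesis using x_mono_lt[OF assms(1), of i j] assms(2,3) by simp
qed simp

lemma dI_abs: "dI x n u v = (SUP y\<in>Ival x n. \<bar>u y - v y\<bar>)"
  unfolding dI_def by (rule SUP_cong) (auto simp: max_def min_def)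

lemma bdd_C:
  assumes "u \<in> CplusI x n" "v \<in> CplusI x n"
  shows "bdd_above ((\<lambda>y. \<bar>u y - v y\<bar>) ` Ival x n)"
proof -
  have "continuous_on (Ival x n) (\<lambda>y. \<bar>u y - v y\<bar>)"
    using assms unfolding CplusI_def by (auto intro!: continuous_intros)
  moreover have "compact (Ival x n)" unfolding Ival_def by simp
  ultimately have "compact ((\<lambda>y. \<bar>u y - v y\<bar>) ` Ival x n)"
    by (rule compact_continuous_image)
  then show ?thesis by (intro bounded_imp_bdd_above compact_imp_bounded)
qed

lemma dI_upper:
  assumes "u \<in> CplusI x n" "v \<in> CplusI x n" "y \<in> Ival x n"
  shows "\<bar>u y - v y\<bar> \<le> dI x n u v"
  unfolding dI_abs using bdd_C[OF assms(1,2)] assms(3) by (rule cSUP_upper2) simp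

lemma dI_least:
  assumes "Ival x n \<noteq> {}" "\<And>y. y \<in> Ival x n \<Longrightarrow> \<bar>u y - v y\<bar> \<le> B"
  shows "dI x n u v \<le> B"
  unfolding dI_abs using assms by (rule cSUP_least)

lemma supnorm_upper:
  assumes "u \<in> CplusI x n" "y \<in> Ival x n"
  shows "\<bar>u y\<bar> \<le> supnormI x n u"
proof -
  have z: "(\<lambda>_. 0::real) \<in> CplusI x n" unfolding CplusI_def by simp
  show ?thesis unfolding supnormI_def
    using bdd_C[OF assms(1) z] assms(2) by (intro cSUP_upper2) auto
qed

lemma subI_sub:
  assumes "\<forall>i<n. x i < x (Suc i)" "i \<in> {1..n}" "y \<in> subI x n i"
  shows "y \<in> {x (i - 1) .. x i}" "y \<in> Ival x n"
proof -
  show 1: "y \<in> {x (i - 1) .. x i}" using assms(2,3) unfolding subI_def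
    by (auto split: if_splits)
  have "x 0 \<le> x (i - 1)" "x i \<le> x n" using x_mono_le[OF assms(1)] assms(2) by auto
  then show "y \<in> Ival x n" using 1 unfolding Ival_def by auto
qed

lemma subI_ex:
  assumes "\<forall>i<n. x i < x (Suc i)" "1 \<le> n" "y \<in> Ival x n"
  shows "\<exists>i\<in>{1..n}. y \<in> subI x n i"
proof (cases "y = x n")
  case True then show ?thesis using assms(2) x_mono_le[OF assms(1), of "n-1" n]
    by (intro bexI[of _ n]) (auto simp: subI_def)
next
  case False
  then have yl: "y < x n" using assms(3) by (auto simp: Ival_def)
  define j where "j = (LEAST j. y < x j)"
  have jy: "y < x j" unfolding j_def using yl by (rule LeastI)
  have jn: "j \<le> n" unfolding j_def using yl by (rule Least_le)
  have j0: "j \<noteq> 0"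
  proof
    assume "j = 0" with jy assms(3) show False by (auto simp: Ival_def)
  qed
  have "\<not> y < x (j - 1)" unfolding j_def using j0
    by (metis diff_less j_def not_less_Least zero_less_one neq0_conv)
  then show ?thesis using jy jn j0
    by (intro bexI[of _ j]) (auto simp: subI_def)
qed

lemma subI_uniq:
  assumes "\<forall>i<n. x i < x (Suc i)" "i \<in> {1..n}" "j \<in> {1..n}"
    "y \<in> subI x n i" "y \<in> subI x n j"
  shows "i = j"
proof (rule ccontr)
  assume "i \<noteq> j"
  then consider "i < j" | "j < i" by linarith
  then show False
  proof cases
    case 1
    then have "y < x i" using assms(2,3,4) by (auto simp: subI_def split: if_splits)
    moreover have "x i \<le> x (j - 1)" using 1 assms(3) x_mono_le[OF assms(1)] by auto
    moreover have "x (j - 1) \<le> y" using subI_sub(1)[OF assms(1,3,5)] by auto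
    ultimately show False by simp
  next
    case 2
    then have "y < x j" using assms(2,3,5) by (auto simp: subI_def split: if_splits)
    moreover have "x j \<le> x (i - 1)" using 2 assms(2) x_mono_le[OF assms(1)] by auto
    moreover have "x (i - 1) \<le> y" using subI_sub(1)[OF assms(1,2,4)] by auto
    ultimately show False by simp
  qed
qed

lemma Top_eq:
  assumes "\<forall>i<n. x i < x (Suc i)" "i \<in> {1..n}" "y \<in> subI x n i"
  shows "Top x n l S L f g y = Tpiece x n l S L f g i y"
proof -
  have "(THE i. i \<in> {1..n} \<and> y \<in> subI x n i) = i"
    using assms subI_uniq[OF assms(1)] by (intro the_equality) auto
  then show ?thesis unfolding Top_def using assms(2,3) by auto
qed

lemma Top_out:
  assumes "\<forall>i<n. x i < x (Suc i)" "y \<notin> Ival x n"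
  shows "Top x n l S L f g y = 0"
  using assms subI_sub(2)[OF assms(1)] unfolding Top_def by auto

theorem theorem5p3:
  fixes x :: "nat \<Rightarrow> real" and n :: nat
    and l S :: "nat \<Rightarrow> real \<Rightarrow> real"
    and L :: "(real \<Rightarrow> real) \<Rightarrow> (real \<Rightarrow> real)"
    and f :: "real \<Rightarrow> real"
  assumes n_pos: "1 \<le> n"
    and x0: "0 \<le> x 0"
    and x_incr: "\<forall>i<n. x i < x (Suc i)"
    and l_homeo: "\<forall>i\<in>{1..n}. \<exists>h. homeomorphism (Ival x n) {x (i - 1) .. x i} (l i) h"
    and l_contr: "\<forall>i\<in>{1..n}. \<exists>c<1. \<forall>y\<in>Ival x n. \<forall>z\<in>Ival x n.
                     \<bar>l i y - l i z\<bar> \<le> c * \<bar>y - z\<bar>"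
    and l_ends: "\<forall>i\<in>{1..n}. l i (x 0) = x (i - 1) \<and> l i (x n) = x i"
    and L_maps: "\<forall>u\<in>CplusI x n. L u \<in> CplusI x n"
    and L_add: "\<forall>u\<in>CplusI x n. \<forall>v\<in>CplusI x n. L (\<lambda>y. u y + v y) = (\<lambda>y. L u y + L v y)"
    and L_hom: "\<forall>u\<in>CplusI x n. \<forall>c::real. 0 \<le> c \<longrightarrow> L (\<lambda>y. c * u y) = (\<lambda>y. c * L u y)"
    and L_bdd: "\<exists>M>0. \<forall>u\<in>CplusI x n. dI x n (L u) (\<lambda>_. 0) \<le> M * dI x n u (\<lambda>_. 0)"
    and f_in: "f \<in> CplusI x n"
    and S_in: "\<forall>i\<in>{1..n}. S i \<in> CplusI x n"
    and Lf_x0: "L f (x 0) = f (x 0)"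
    and Lf_xn: "L f (x n) = f (x n)"
    and T_nonneg: "\<forall>g\<in>CplusI x n. \<forall>y\<in>Ival x n. 0 \<le> Top x n l S L f g y"
    and T_joinup: "\<forall>g\<in>CplusI x n. \<forall>j\<in>{1..n-1}. \<exists>a.
                     (Top x n l S L f g \<longlongrightarrow> a) (at_left (x j)) \<and>
                     (Top x n l S L f g \<longlongrightarrow> a) (at_right (x j))"
    and S_small: "Max ((\<lambda>i. supnormI x n (S i)) ` {1..n}) < 1"
  shows "(\<exists>c<1. \<forall>g\<in>CplusI x n. \<forall>h\<in>CplusI x n.
            dI x n (Top x n l S L f g) (Top x n l S L f h) \<le> c * dI x n g h)
       \<and> (\<exists>!fs. fs \<in> CplusI x n \<and> Top x n l S L f fs = fs)
       \<and> (\<forall>fs\<in>CplusI x n. Top x n l S L f fs = fs \<longrightarrow>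
            (\<forall>i\<in>{1..n}. \<forall>y\<in>subI x n i. fs y = Tpiece x n l S L f fs i y))"
proof -
  let ?C = "CplusI x n"
  let ?I = "Ival x n"
  let ?T = "Top x n l S L f"
  have xle: "\<And>i j. i \<le> j \<Longrightarrow> j \<le> n \<Longrightarrow> x i \<le> x j" using x_mono_le[OF x_incr] by blast
  have xlt: "\<And>i j. i < j \<Longrightarrow> j \<le> n \<Longrightarrow> x i < x j" using x_mono_lt[OF x_incr] by blast
  have Ine: "?I \<noteq> {}" using xle[of 0 n] by (auto simp: Ival_def)
  have x0I: "x 0 \<in> ?I" using xle[of 0 n] by (auto simp: Ival_def)
  obtain H where H: "\<forall>i\<in>{1..n}. homeomorphism ?I {x (i - 1) .. x i} (l i) (H i)"
    using bchoice[OF l_homeo] by blast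
  have Hinv: "inv_into ?I (l i) y = H i y \<and> H i y \<in> ?I"
    if i: "i \<in> {1..n}" and y: "y \<in> {x (i - 1) .. x i}" for i y
  proof -
    note hh = H[rule_format, OF i, unfolded homeomorphism_def]
    have inj: "inj_on (l i) ?I" by (rule inj_on_inverseI[where g="H i"]) (use hh in blast)
    have Hy: "H i y \<in> ?I" using hh y by blast
    have "l i (H i y) = y" using hh y by blast
    then show ?thesis using inv_into_f_eq[OF inj Hy] Hy by blast
  qed
  have Hcont: "continuous_on {x (i - 1) .. x i} (H i)" if "i \<in> {1..n}" for i
    using H that unfolding homeomorphism_def by blast
  have fC: "continuous_on ?I f" using f_in by (simp add: CplusI_def)
  have LfC: "continuous_on ?I (L f)" using L_maps f_in by (simp add: CplusI_def)
  have SC: "continuous_on ?I (S i)" if "i \<in> {1..n}" for i using S_in that by (simp add: CplusI_def)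
  have JsubI: "{x (i - 1) .. x i} \<subseteq> ?I" if i: "i \<in> {1..n}" for i
  proof -
    have "x 0 \<le> x (i - 1)" "x i \<le> x n" using xle i by auto
    then show ?thesis by (auto simp: Ival_def)
  qed
  have Pcont: "continuous_on {x (i - 1) .. x i} (Tpiece x n l S L f g i)"
    if g: "g \<in> ?C" and i: "i \<in> {1..n}" for g i
  proof -
    let ?J = "{x (i - 1) .. x i}"
    have gC: "continuous_on ?I g" using g by (simp add: CplusI_def)
    have HJ: "H i ` ?J \<subseteq> ?I" using Hinv[OF i] by blast
    have a: "continuous_on ?J f" by (rule continuous_on_subset[OF fC JsubI[OF i]])
    have b: "continuous_on ?J (\<lambda>y. S i (H i y))" by (rule continuous_on_compose2[OF SC[OF i] Hcont[OF i] HJ])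
    have c: "continuous_on ?J (\<lambda>y. g (H i y))" by (rule continuous_on_compose2[OF gC Hcont[OF i] HJ])
    have d: "continuous_on ?J (\<lambda>y. L f (H i y))" by (rule continuous_on_compose2[OF LfC Hcont[OF i] HJ])
    have "continuous_on ?J (\<lambda>y. f y + S i (H i y) * (g (H i y) - L f (H i y)))"
      by (intro continuous_on_add continuous_on_mult continuous_on_diff a b c d)
    then show ?thesis
      by (rule continuous_on_eq) (simp add: Tpiece_def Let_def Hinv[OF i])
  qed
  have TP: "?T g y = Tpiece x n l S L f g i y"
    if g: "g \<in> ?C" and i: "i \<in> {1..n}" and y: "y \<in> {x (i - 1) .. x i}" for g i y
  proof (cases "y < x i \<or> i = n")
    case True
    then have "y \<in> subI x n i" using y i by (auto simp: subI_def)
    then show ?thesis by (rule Top_eq[OF x_incr i])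
  next
    case False
    then have yi: "y = x i" and iln: "i < n" using y i by auto
    have i1: "i \<in> {1..n-1}" using i iln by auto
    have i2: "Suc i \<in> {1..n}" using iln by auto
    obtain a where aL: "(?T g \<longlongrightarrow> a) (at_left (x i))" and aR: "(?T g \<longlongrightarrow> a) (at_right (x i))"
      using T_joinup g i1 by blast
    have lt1: "x (i - 1) < x i" using xlt[of "i-1" i] i by auto
    have lt2: "x i < x (Suc i)" using x_incr iln by auto
    let ?P = "Tpiece x n l S L f g i"
    let ?Q = "Tpiece x n l S L f g (Suc i)"
    have P1: "(?P \<longlongrightarrow> ?P (x i)) (at_left (x i))"
      unfolding at_within_Icc_at_left[OF lt1, symmetric]
      using Pcont[OF g i] lt1 unfolding continuous_on_def by auto
    have ev1: "eventually (\<lambda>y. ?P y = ?T g y) (at_left (x i))"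
    proof (rule eventually_mono[OF eventually_at_left_real[OF lt1]])
      fix y assume "y \<in> {x (i - 1)<..<x i}"
      then have "y \<in> subI x n i" using iln by (auto simp: subI_def)
      then show "?P y = ?T g y" using Top_eq[OF x_incr i] by simp
    qed
    have "(?T g \<longlongrightarrow> ?P (x i)) (at_left (x i))" by (rule Lim_transform_eventually[OF P1 ev1])
    then have aP: "a = ?P (x i)" by (intro tendsto_unique[OF _ aL]) simp_all
    have Q1: "(?Q \<longlongrightarrow> ?Q (x i)) (at_right (x i))"
      unfolding at_within_Icc_at_right[OF lt2, symmetric]
      using Pcont[OF g i2] lt2 unfolding continuous_on_def by auto
    have ev2: "eventually (\<lambda>y. ?Q y = ?T g y) (at_right (x i))"
    proof (rule eventually_mono[OF eventually_at_right_real[OF lt2]])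
      fix y assume "y \<in> {x i<..<x (Suc i)}"
      then have "y \<in> subI x n (Suc i)" using iln by (cases "Suc i = n") (auto simp: subI_def)
      then show "?Q y = ?T g y" using Top_eq[OF x_incr i2] by simp
    qed
    have "(?T g \<longlongrightarrow> ?Q (x i)) (at_right (x i))" by (rule Lim_transform_eventually[OF Q1 ev2])
    then have aQ: "a = ?Q (x i)" by (intro tendsto_unique[OF _ aR]) simp_all
    have "x i \<in> subI x n (Suc i)" using lt2 iln by (cases "Suc i = n") (auto simp: subI_def)
    then have "?T g (x i) = ?Q (x i)" using Top_eq[OF x_incr i2] by simp
    then show ?thesis using aP aQ yi by simp
  qed
  have Iunion: "?I = (\<Union>i\<in>{1..n}. {x (i - 1) .. x i})"
  proof
    show "?I \<subseteq> (\<Union>i\<in>{1..n}. {x (i - 1) .. x i})"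
    proof
      fix y assume y: "y \<in> ?I"
      then obtain i where i: "i \<in> {1..n}" and yi: "y \<in> subI x n i"
        using subI_ex[OF x_incr n_pos] by blast
      have "y \<in> {x (i - 1) .. x i}" by (rule subI_sub(1)[OF x_incr i yi])
      then show "y \<in> (\<Union>i\<in>{1..n}. {x (i - 1) .. x i})" using i by blast
    qed
    show "(\<Union>i\<in>{1..n}. {x (i - 1) .. x i}) \<subseteq> ?I" using JsubI by blast
  qed
  have TC: "?T g \<in> ?C" if g: "g \<in> ?C" for g
  proof -
    have "continuous_on (\<Union>i\<in>{1..n}. {x (i - 1) .. x i}) (?T g)"
    proof (rule continuous_on_closed_Union)
      fix i assume i: "i \<in> {1..n}"
      show "continuous_on {x (i - 1) .. x i} (?T g)"
        using Pcont[OF g i] by (rule continuous_on_eq) (simp add: TP[OF g i])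
    qed auto
    then have "continuous_on ?I (?T g)" using Iunion by simp
    moreover have "\<forall>y\<in>?I. 0 \<le> ?T g y" using T_nonneg g by blast
    moreover have "\<forall>y. y \<notin> ?I \<longrightarrow> ?T g y = 0" using Top_out[OF x_incr] by blast
    ultimately show ?thesis unfolding CplusI_def by simp
  qed
  define c where "c = Max ((\<lambda>i. supnormI x n (S i)) ` {1..n})"
  have Sc: "\<bar>S i z\<bar> \<le> c" if i: "i \<in> {1..n}" and z: "z \<in> ?I" for i z
  proof -
    have "\<bar>S i z\<bar> \<le> supnormI x n (S i)" using supnorm_upper S_in i z by blast
    also have "... \<le> c" unfolding c_def using i by (intro Max_ge) auto
    finally show ?thesis .
  qed
  have c0: "0 \<le> c" using Sc[of 1 "x 0"] n_pos x0I by force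
  have c1: "c < 1" using S_small c_def by simp
  have dnn: "0 \<le> dI x n g h" if "g \<in> ?C" "h \<in> ?C" for g h
    using dI_upper[OF that x0I] by (meson abs_ge_zero order_trans)
  have key: "\<bar>?T g y - ?T h y\<bar> \<le> c * dI x n g h"
    if g: "g \<in> ?C" and h: "h \<in> ?C" and y: "y \<in> ?I" for g h y
  proof -
    obtain i where i: "i \<in> {1..n}" and yi: "y \<in> subI x n i" using subI_ex[OF x_incr n_pos y] by blast
    define z where "z = inv_into ?I (l i) y"
    have zI: "z \<in> ?I" using Hinv[OF i subI_sub(1)[OF x_incr i yi]] z_def by simp
    have "?T g y - ?T h y = S i z * (g z - h z)"
      using Top_eq[OF x_incr i yi, of l S L f g] Top_eq[OF x_incr i yi, of l S L f h]
      by (simp add: Tpiece_def Let_def z_def algebra_simps)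
    hence "\<bar>?T g y - ?T h y\<bar> = \<bar>S i z\<bar> * \<bar>g z - h z\<bar>" by (simp add: abs_mult)
    also have "... \<le> c * dI x n g h" by (rule mult_mono[OF Sc[OF i zI] dI_upper[OF g h zI] c0 abs_ge_zero])
    finally show ?thesis .
  qed
  have contr: "dI x n (?T g) (?T h) \<le> c * dI x n g h" if g: "g \<in> ?C" and h: "h \<in> ?C" for g h
    by (rule dI_least[OF Ine]) (rule key[OF g h])
  define dd where "dd = (\<lambda>u v. if u \<in> ?C \<and> v \<in> ?C then dI x n u v else 0)"
  have dI_comm: "dI x n u v = dI x n v u" for u v unfolding dI_abs by (simp add: abs_minus_commute)
  have dI_zero: "dI x n u v = 0 \<longleftrightarrow> u = v" if u: "u \<in> ?C" and v: "v \<in> ?C" for u v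
  proof
    assume d0: "dI x n u v = 0"
    show "u = v"
    proof
      fix y show "u y = v y"
      proof (cases "y \<in> ?I")
        case True then show ?thesis using dI_upper[OF u v True] d0 by simp
      next
        case False then show ?thesis using u v by (simp add: CplusI_def)
      qed
    qed
  next
    assume "u = v" then show "dI x n u v = 0" unfolding dI_abs using Ine by (simp add: cSUP_const)
  qed
  have tri: "dI x n u w \<le> dI x n u v + dI x n v w" if u: "u \<in> ?C" and v: "v \<in> ?C" and w: "w \<in> ?C" for u v w
  proof (rule dI_least[OF Ine])
    fix y assume y: "y \<in> ?I"
    have "\<bar>u y - w y\<bar> \<le> \<bar>u y - v y\<bar> + \<bar>v y - w y\<bar>" by simp
    also have "... \<le> dI x n u v + dI x n v w" using dI_upper[OF u v y] dI_upper[OF v w y] by simp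
    finally show "\<bar>u y - w y\<bar> \<le> dI x n u v + dI x n v w" .
  qed
  interpret M: Metric_space ?C dd
  proof
    fix u v w
    show "0 \<le> dd u v" by (simp add: dd_def dnn)
    show "dd u v = dd v u" unfolding dd_def using dI_comm[of u v] by auto
    show "u \<in> ?C \<Longrightarrow> v \<in> ?C \<Longrightarrow> dd u v = 0 \<longleftrightarrow> u = v" by (simp add: dd_def dI_zero)
    show "u \<in> ?C \<Longrightarrow> v \<in> ?C \<Longrightarrow> w \<in> ?C \<Longrightarrow> dd u w \<le> dd u v + dd v w"
      by (simp add: dd_def tri)
  qed
  have mc: "M.mcomplete"
    unfolding M.mcomplete_def M.MCauchy_def
  proof (intro allI impI)
    fix \<sigma> :: "nat \<Rightarrow> real \<Rightarrow> real" assume A: "range \<sigma> \<subseteq> ?C \<and> (\<forall>\<epsilon>>0. \<exists>N. \<forall>p q. N \<le> p \<longrightarrow> N \<le> q \<longrightarrow> dd (\<sigma> p) (\<sigma> q) < \<epsilon>)"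
    then have sC: "\<And>k. \<sigma> k \<in> ?C" by auto
    have cau: "\<exists>N. \<forall>p q. N \<le> p \<longrightarrow> N \<le> q \<longrightarrow> dI x n (\<sigma> p) (\<sigma> q) < e" if e: "e > 0" for e
      using A e sC by (simp add: dd_def)
    have uc: "uniformly_Cauchy_on ?I \<sigma>"
    proof (rule uniformly_Cauchy_onI)
      fix e :: real assume e: "e > 0"
      obtain N where N: "\<forall>p q. N \<le> p \<longrightarrow> N \<le> q \<longrightarrow> dI x n (\<sigma> p) (\<sigma> q) < e" using cau[OF e] by blast
      show "\<exists>M. \<forall>y\<in>?I. \<forall>p\<ge>M. \<forall>q\<ge>M. dist (\<sigma> p y) (\<sigma> q y) < e"
      proof (intro exI[of _ N] ballI allI impI)
        fix y p q assume y: "y \<in> ?I" and p: "N \<le> p" and q: "N \<le> q"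
        show "dist (\<sigma> p y) (\<sigma> q y) < e"
          using le_less_trans[OF dI_upper[OF sC sC y] N[rule_format, OF p q]] by (simp add: dist_real_def)
      qed
    qed
    obtain G0 where ul: "uniform_limit ?I \<sigma> G0 sequentially"
      using Cauchy_uniformly_convergent[OF uc] unfolding uniformly_convergent_on_def by blast
    define G where "G = (\<lambda>y. if y \<in> ?I then G0 y else 0)"
    have "continuous_on ?I G0"
      by (rule uniform_limit_theorem[OF _ ul]) (use sC in \<open>auto simp: CplusI_def\<close>)
    then have Gc: "continuous_on ?I G" by (rule continuous_on_eq) (simp add: G_def)
    have Gnn: "0 \<le> G0 y" if y: "y \<in> ?I" for y
    proof (rule tendsto_lowerbound[OF tendsto_uniform_limitI[OF ul y]])
      show "\<forall>\<^sub>F k in sequentially. 0 \<le> \<sigma> k y" using sC y by (simp add: CplusI_def)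
    qed simp
    have GC: "G \<in> ?C" using Gc Gnn unfolding CplusI_def G_def by auto
    show "\<exists>G. limitin M.mtopology \<sigma> G sequentially"
      unfolding M.limitin_metric
    proof (intro exI[of _ G] conjI allI impI)
      show "G \<in> ?C" by (rule GC)
      fix \<epsilon> :: real assume e: "\<epsilon> > 0"
      have "\<forall>\<^sub>F k in sequentially. \<forall>y\<in>?I. dist (\<sigma> k y) (G0 y) < \<epsilon>/2"
        using uniform_limitD[OF ul, of "\<epsilon>/2"] e by simp
      then show "\<forall>\<^sub>F k in sequentially. \<sigma> k \<in> ?C \<and> dd (\<sigma> k) G < \<epsilon>"
      proof (rule eventually_mono)
        fix k assume k: "\<forall>y\<in>?I. dist (\<sigma> k y) (G0 y) < \<epsilon>/2"
        have "dI x n (\<sigma> k) G \<le> \<epsilon>/2"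
        proof (rule dI_least[OF Ine])
          fix y assume "y \<in> ?I"
          then show "\<bar>\<sigma> k y - G y\<bar> \<le> \<epsilon>/2" using k by (auto simp: G_def dist_real_def)
        qed
        then show "\<sigma> k \<in> ?C \<and> dd (\<sigma> k) G < \<epsilon>" using sC GC e by (simp add: dd_def)
      qed
    qed
  qed
  have ne: "?C \<noteq> {}" using f_in by blast
  have fim: "?T \<in> ?C \<rightarrow> ?C" using TC by blast
  have condd: "dd (?T u) (?T v) \<le> c * dd u v" if "u \<in> ?C" "v \<in> ?C" for u v
    using contr[OF that] TC[OF that(1)] TC[OF that(2)] that by (simp add: dd_def)
  obtain fs where fsC: "fs \<in> ?C" and fsfix: "?T fs = fs"
    using M.Banach_fixedpoint_thm[OF mc ne fim c1 condd] by blast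
  have uniq: "a = b" if a: "a \<in> ?C" and b: "b \<in> ?C" and ta: "?T a = a" and tb: "?T b = b" for a b
  proof -
    have le: "dI x n a b \<le> c * dI x n a b" using contr[OF a b] ta tb by simp
    have "dI x n a b = 0"
    proof (rule ccontr)
      assume "dI x n a b \<noteq> 0"
      then have pos: "0 < dI x n a b" using dnn[OF a b] by simp
      have "c * dI x n a b < 1 * dI x n a b" by (rule mult_strict_right_mono[OF c1 pos])
      then show False using le by simp
    qed
    then show ?thesis using dI_zero[OF a b] by simp
  qed
  show ?thesis
  proof (intro conjI)
    show "\<exists>c<1. \<forall>g\<in>?C. \<forall>h\<in>?C. dI x n (?T g) (?T h) \<le> c * dI x n g h" using c1 contr by blast
    show "\<exists>!fs. fs \<in> ?C \<and> ?T fs = fs" using fsC fsfix uniq by blast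
    show "\<forall>fs\<in>?C. ?T fs = fs \<longrightarrow> (\<forall>i\<in>{1..n}. \<forall>y\<in>subI x n i. fs y = Tpiece x n l S L f fs i y)"
    proof (intro ballI impI)
      fix fs i y assume "fs \<in> ?C" "?T fs = fs" "i \<in> {1..n}" "y \<in> subI x n i"
      then show "fs y = Tpiece x n l S L f fs i y" using Top_eq[OF x_incr, of i y l S L f fs] by simp
    qed
  qed
qed

end
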